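(* Let $\mathbb{F}$ be a field and let $n,k$ be integers with $n>k>1$. Let $l$ be a positive integer such that $l<2^{n-k}$ and the binary decomposition of $l$ contains at most $k$ digits equal to $1$. Then there exists a unital $\mathbb{F}$-algebra $\mathcal{A}$ with $\dim\mathcal{A}=n$ and $l(\mathcal{A})=l$.
   Context: All algebras are finite-dimensional, unital, not necessarily associative algebras over the field $\mathbb{F}$. For a finite generating set $S$ of an algebra $\mathcal{A}$, a word in $S$ is any product (with any bracketing) of finitely many elements of $S$; its length is the number of factors, and $1$ is a word of length $0$. $L_i(S)$ is the linear span of all words in $S$ of length at most $i$. The length of $S$ is $l(S)=\min\{k\ge0: L_k(S)=\mathcal{A}\}$, and $l(\mathcal{A})=\max\{l(S): S\text{ a finite generating set of }\mathcal{A}\}$. *)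

theory Defs
  imports Main
begin

text \<open>An n-dimensional (not necessarily associative) algebra over a field 'f is
  represented by structure constants c: the carrier is F^n, realised as the functions
  nat => 'f vanishing outside {0..<n}; the product of basis vectors e_i e_j is
  (c i j k)_k.  Every finite-dimensional algebra is isomorphic to one of these.\<close>

definition carrier_n :: "nat \<Rightarrow> (nat \<Rightarrow> 'f::field) set" where
  "carrier_n n = {v. \<forall>i\<ge>n. v i = 0}"

definition sc_mult :: "nat \<Rightarrow> (nat \<Rightarrow> nat \<Rightarrow> nat \<Rightarrow> 'f::field)
    \<Rightarrow> (nat \<Rightarrow> 'f) \<Rightarrow> (nat \<Rightarrow> 'f) \<Rightarrow> (nat \<Rightarrow> 'f)" where
  "sc_mult n c x y = (\<lambda>k. if k < n then (\<Sum>i<n. \<Sum>j<n. x i * y j * c i j k) else 0)"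

definition is_unit_of :: "nat \<Rightarrow> (nat \<Rightarrow> nat \<Rightarrow> nat \<Rightarrow> 'f::field) \<Rightarrow> (nat \<Rightarrow> 'f) \<Rightarrow> bool" where
  "is_unit_of n c e \<longleftrightarrow> e \<in> carrier_n n \<and>
     (\<forall>x\<in>carrier_n n. sc_mult n c e x = x \<and> sc_mult n c x e = x)"

definition unital_sc :: "nat \<Rightarrow> (nat \<Rightarrow> nat \<Rightarrow> nat \<Rightarrow> 'f::field) \<Rightarrow> bool" where
  "unital_sc n c \<longleftrightarrow> (\<exists>e. is_unit_of n c e)"

definition lin_span :: "(nat \<Rightarrow> 'f::field) set \<Rightarrow> (nat \<Rightarrow> 'f) set" where
  "lin_span A = {v. \<exists>T a. finite T \<and> T \<subseteq> A \<and> v = (\<lambda>k. \<Sum>x\<in>T. a x * x k)}"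

text \<open>Words in S together with their length (number of factors); the unit e is the
  word of length 0; any bracketing is allowed.\<close>
inductive_set words :: "('v \<Rightarrow> 'v \<Rightarrow> 'v) \<Rightarrow> 'v \<Rightarrow> 'v set \<Rightarrow> ('v \<times> nat) set"
  for mul e S where
  w_one: "(e, 0) \<in> words mul e S"
| w_gen: "s \<in> S \<Longrightarrow> (s, 1) \<in> words mul e S"
| w_mul: "(x, a) \<in> words mul e S \<Longrightarrow> (y, b) \<in> words mul e S \<Longrightarrow> (mul x y, a + b) \<in> words mul e S"

definition L_sc :: "nat \<Rightarrow> (nat \<Rightarrow> nat \<Rightarrow> nat \<Rightarrow> 'f::field) \<Rightarrow> (nat \<Rightarrow> 'f) \<Rightarrow> (nat \<Rightarrow> 'f) set
    \<Rightarrow> nat \<Rightarrow> (nat \<Rightarrow> 'f) set" where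
  "L_sc n c e S i = lin_span {x. \<exists>j\<le>i. (x, j) \<in> words (sc_mult n c) e S}"

definition generating_sc :: "nat \<Rightarrow> (nat \<Rightarrow> nat \<Rightarrow> nat \<Rightarrow> 'f::field) \<Rightarrow> (nat \<Rightarrow> 'f) \<Rightarrow> (nat \<Rightarrow> 'f) set \<Rightarrow> bool" where
  "generating_sc n c e S \<longleftrightarrow> finite S \<and> S \<subseteq> carrier_n n \<and> (\<Union>i. L_sc n c e S i) = carrier_n n"

definition length_set_sc :: "nat \<Rightarrow> (nat \<Rightarrow> nat \<Rightarrow> nat \<Rightarrow> 'f::field) \<Rightarrow> (nat \<Rightarrow> 'f) \<Rightarrow> (nat \<Rightarrow> 'f) set \<Rightarrow> nat" where
  "length_set_sc n c e S = (LEAST k. L_sc n c e S k = carrier_n n)"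

definition algebra_length_is :: "nat \<Rightarrow> (nat \<Rightarrow> nat \<Rightarrow> nat \<Rightarrow> 'f::field) \<Rightarrow> nat \<Rightarrow> bool" where
  "algebra_length_is n c m \<longleftrightarrow> (\<exists>e. is_unit_of n c e \<and>
     (\<exists>S. generating_sc n c e S \<and> length_set_sc n c e S = m) \<and>
     (\<forall>S. generating_sc n c e S \<longrightarrow> length_set_sc n c e S \<le> m))"

fun ones_count :: "nat \<Rightarrow> nat" where
  "ones_count m = (if m = 0 then 0 else m mod 2 + ones_count (m div 2))"

declare ones_count.simps[simp del]

end

theory Submission
  imports Defs "HOL-Library.Function_Algebras" HOL.Modules
begin


definition scl :: "'f::field \<Rightarrow> (nat \<Rightarrow> 'f) \<Rightarrow> (nat \<Rightarrow> 'f)" where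
  "scl a v = (\<lambda>k. a * v k)"

interpretation V: module "scl :: 'f::field \<Rightarrow> (nat \<Rightarrow> 'f) \<Rightarrow> (nat \<Rightarrow> 'f)"
  by standard (auto simp: scl_def algebra_simps)

lemma sum_fun_apply: "(\<Sum>x\<in>T. f x) k = (\<Sum>x\<in>T. f x k)"
  by (induct T rule: infinite_finite_induct) auto

lemma scl_apply: "scl a v k = a * v k" by (simp add: scl_def)

lemma lin_span_eq: "lin_span A = V.span A"
  unfolding lin_span_def V.span_explicit
  by (auto simp: sum_fun_apply scl_def fun_eq_iff)

lemma sc_add_left: "sc_mult n c (x + y) z = sc_mult n c x z + sc_mult n c y z"
  unfolding sc_mult_def by (auto simp: algebra_simps sum.distrib intro!: ext)
lemma sc_add_right: "sc_mult n c z (x + y) = sc_mult n c z x + sc_mult n c z y"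
  unfolding sc_mult_def by (auto simp: algebra_simps sum.distrib intro!: ext)
lemma sc_scl_left: "sc_mult n c (scl a x) z = scl a (sc_mult n c x z)"
  unfolding sc_mult_def scl_def by (auto simp: algebra_simps sum_distrib_left intro!: ext)
lemma sc_scl_right: "sc_mult n c z (scl a x) = scl a (sc_mult n c z x)"
  unfolding sc_mult_def scl_def by (auto simp: algebra_simps sum_distrib_left intro!: ext)
lemma sc_zero_left: "sc_mult n c 0 z = 0"
  unfolding sc_mult_def by (auto intro!: ext)
lemma sc_zero_right: "sc_mult n c z 0 = 0"
  unfolding sc_mult_def by (auto intro!: ext)
lemma sc_diff_left: "sc_mult n c (x - y) z = sc_mult n c x z - sc_mult n c y z"
  unfolding sc_mult_def by (auto simp: algebra_simps sum_subtractf intro!: ext)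
lemma sc_diff_right: "sc_mult n c z (x - y) = sc_mult n c z x - sc_mult n c z y"
  unfolding sc_mult_def by (auto simp: algebra_simps sum_subtractf intro!: ext)

lemma sc_carrier: "sc_mult n c x y \<in> carrier_n n"
  unfolding sc_mult_def carrier_n_def by auto

lemma carrier_subspace: "V.subspace (carrier_n n)"
  unfolding V.subspace_def carrier_n_def scl_def by auto

definition W :: "nat \<Rightarrow> (nat \<Rightarrow> nat \<Rightarrow> nat \<Rightarrow> 'f::field) \<Rightarrow> (nat \<Rightarrow> 'f) \<Rightarrow> (nat \<Rightarrow> 'f) set \<Rightarrow> nat \<Rightarrow> (nat \<Rightarrow> 'f) set" where
  "W n c e S i = {x. \<exists>j\<le>i. (x, j) \<in> words (sc_mult n c) e S}"

lemma L_eq: "L_sc n c e S i = V.span (W n c e S i)"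
  unfolding L_sc_def W_def lin_span_eq ..

lemma L_mult:
  assumes "x \<in> L_sc n c e S a" "y \<in> L_sc n c e S b"
  shows "sc_mult n c x y \<in> L_sc n c e S (a+b)"
proof -
  have base: "sc_mult n c x y \<in> V.span (W n c e S (a+b))"
    if hx: "x \<in> W n c e S a" and hy: "y \<in> V.span (W n c e S b)" for x y
    using hy
  proof (induct rule: V.span_induct)
    case base
    show ?case by (rule V.subspaceI) (auto simp: sc_zero_right sc_add_right sc_scl_right V.span_zero V.span_add V.span_scale)
  next
    case (step y)
    then obtain i j where "i \<le> a" "(x,i) \<in> words (sc_mult n c) e S" "j \<le> b" "(y,j) \<in> words (sc_mult n c) e S"
      using hx unfolding W_def by auto
    then have "(sc_mult n c x y, i + j) \<in> words (sc_mult n c) e S" "i + j \<le> a + b"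
      by (auto intro: words.w_mul)
    then show ?case unfolding W_def by (intro V.span_base) auto
  qed
  have "\<forall>y\<in>V.span (W n c e S b). sc_mult n c x y \<in> V.span (W n c e S (a+b))"
    using assms(1) unfolding L_eq
  proof (induct rule: V.span_induct)
    case base
    show ?case by (rule V.subspaceI) (auto simp: sc_zero_left sc_add_left sc_scl_left V.span_zero V.span_add V.span_scale)
  next
    case (step x)
    then show ?case using base by auto
  qed
  then show ?thesis using assms(2) unfolding L_eq by auto
qed

lemma W_mono: "i \<le> j \<Longrightarrow> W n c e S i \<subseteq> W n c e S j"
  unfolding W_def using order_trans by blast

lemma L_mono: "i \<le> j \<Longrightarrow> L_sc n c e S i \<subseteq> L_sc n c e S j"
  unfolding L_eq by (intro V.span_mono W_mono)

lemma word_in_L: "(x, i) \<in> words (sc_mult n c) e S \<Longrightarrow> x \<in> L_sc n c e S i"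
  unfolding L_eq W_def by (intro V.span_base) auto

lemma words_in_L_of:
  assumes "S \<subseteq> L_sc n c e T 1"
  shows "(x, i) \<in> words (sc_mult n c) e S \<Longrightarrow> x \<in> L_sc n c e T i"
proof (induct rule: words.induct)
  case w_one
  then show ?case by (rule word_in_L[OF words.w_one])
next
  case (w_gen s)
  then show ?case using assms by auto
next
  case (w_mul x a y b)
  show ?case using w_mul.hyps(2,4) by (rule L_mult)
qed

lemma L_sub_of:
  assumes "S \<subseteq> L_sc n c e T 1"
  shows "L_sc n c e S j \<subseteq> L_sc n c e T j"
proof -
  have "W n c e S j \<subseteq> L_sc n c e T j"
  proof
    fix x assume "x \<in> W n c e S j"
    then obtain i where "i \<le> j" "(x,i) \<in> words (sc_mult n c) e S" unfolding W_def by auto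
    then show "x \<in> L_sc n c e T j" using words_in_L_of[OF assms] L_mono by blast
  qed
  then show ?thesis unfolding L_eq[of n c e S] by (intro V.span_minimal) (auto simp: L_eq)
qed

lemma words_carrier:
  assumes "S \<subseteq> carrier_n n" "e \<in> carrier_n n"
  shows "(x, i) \<in> words (sc_mult n c) e S \<Longrightarrow> x \<in> carrier_n n"
  by (induct rule: words.induct) (use assms sc_carrier in auto)

lemma L_carrier:
  assumes "S \<subseteq> carrier_n n" "e \<in> carrier_n n"
  shows "L_sc n c e S i \<subseteq> carrier_n n"
  unfolding L_eq
  by (intro V.span_minimal carrier_subspace) (use words_carrier[OF assms] in \<open>auto simp: W_def\<close>)



definition E :: "nat \<Rightarrow> nat \<Rightarrow> 'f::field" where "E t = (\<lambda>k. if k = t then 1 else 0)"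

lemma E_carrier: "t < n \<Longrightarrow> E t \<in> carrier_n n"
  unfolding E_def carrier_n_def by auto

lemma if01_mult[simp]: "(if P then 1 else 0) * y = (if P then y else (0::'a::semiring_1))"
  "y * (if P then 1 else 0) = (if P then y else (0::'a::semiring_1))"
  "(if P then y else 0) * z = (if P then y * z else (0::'a::semiring_1))" by auto

lemma sum_if_const[simp]: "(\<Sum>j\<in>A. if P then f j else 0) = (if P then (\<Sum>j\<in>A. f j) else 0)"
  by auto

lemma carrier_expand:
  assumes "v \<in> carrier_n n"
  shows "v = (\<Sum>s<n. scl (v s) (E s))"
proof (rule ext)
  fix k
  show "v k = (\<Sum>s<n. scl (v s) (E s)) k"
    using assms unfolding sum_fun_apply scl_def E_def carrier_n_def
    by (cases "k < n") (auto simp: if_distrib cong: if_cong)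
qed

lemma sc_E_E:
  assumes "a < n" "b < n"
  shows "sc_mult n c (E a) (E b) = (\<lambda>k. if k < n then c a b k else 0)"
  using assms unfolding sc_mult_def E_def by (auto intro!: ext)

locale galg =
  fixes n :: nat and c :: "nat \<Rightarrow> nat \<Rightarrow> nat \<Rightarrow> 'f::field" and wt :: "nat \<Rightarrow> nat" and M :: nat
  assumes n_pos: "0 < n"
    and c0l: "\<And>j k. j < n \<Longrightarrow> k < n \<Longrightarrow> c 0 j k = (if j = k then 1 else 0)"
    and c0r: "\<And>i k. i < n \<Longrightarrow> k < n \<Longrightarrow> c i 0 k = (if i = k then 1 else 0)"
    and grad: "\<And>i j k. i < n \<Longrightarrow> j < n \<Longrightarrow> k < n \<Longrightarrow> c i j k \<noteq> 0 \<Longrightarrow> wt k = wt i + wt j"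
    and wt0: "wt 0 = 0"
    and wtpos: "\<And>t. 0 < t \<Longrightarrow> t < n \<Longrightarrow> 1 \<le> wt t \<and> wt t \<le> M"
    and top: "\<exists>t<n. wt t = M"
    and Mpos: "1 \<le> M"
    and decomp: "\<And>t. 0 < t \<Longrightarrow> t < n \<Longrightarrow> 2 \<le> wt t \<Longrightarrow> \<exists>a b. 0 < a \<and> a < n \<and> 0 < b \<and> b < n
        \<and> wt a + wt b = wt t \<and> sc_mult n c (E a) (E b) = E t"
begin

abbreviation mul where "mul \<equiv> sc_mult n c"
abbreviation e where "e \<equiv> (E 0 :: nat \<Rightarrow> 'f)"

lemma unit: "is_unit_of n c e"
proof -
  have l: "mul e x = x" if "x \<in> carrier_n n" for x
  proof (rule ext)
    fix k show "mul e x k = x k"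
    proof (cases "k < n")
      case True
      then have "mul e x k = (\<Sum>j<n. x j * c 0 j k)"
        using n_pos unfolding sc_mult_def E_def by simp
      also have "\<dots> = (\<Sum>j<n. if j = k then x j else 0)"
        using True by (intro sum.cong) (auto simp: c0l)
      also have "\<dots> = x k" using True by simp
      finally show ?thesis .
    next
      case False then show ?thesis using that unfolding sc_mult_def carrier_n_def by auto
    qed
  qed
  have r: "mul x e = x" if "x \<in> carrier_n n" for x
  proof (rule ext)
    fix k show "mul x e k = x k"
    proof (cases "k < n")
      case True
      then have "mul x e k = (\<Sum>i<n. x i * c i 0 k)"
        using n_pos unfolding sc_mult_def E_def by simp
      also have "\<dots> = (\<Sum>i<n. if i = k then x i else 0)"
        using True by (intro sum.cong) (auto simp: c0r)
      also have "\<dots> = x k" using True by simp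
      finally show ?thesis .
    next
      case False then show ?thesis using that unfolding sc_mult_def carrier_n_def by auto
    qed
  qed
  show ?thesis unfolding is_unit_of_def using l r E_carrier n_pos by auto
qed

definition F :: "nat \<Rightarrow> (nat \<Rightarrow> 'f) set" where
  "F d = {v \<in> carrier_n n. \<forall>t. v t \<noteq> 0 \<longrightarrow> 0 < t \<and> d \<le> wt t}"

lemma F_sub: "V.subspace (F d)"
  unfolding V.subspace_def F_def carrier_n_def scl_def by (auto, (metis add.right_neutral)+)

lemma F_mono: "d \<le> d' \<Longrightarrow> F d' \<subseteq> F d"
  unfolding F_def by auto

lemma F_mult:
  assumes "x \<in> F a" "y \<in> F b"
  shows "mul x y \<in> F (a + b)"
proof -
  have "0 < k \<and> a + b \<le> wt k" if "mul x y k \<noteq> 0" for k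
  proof -
  from that have "k < n" and "(\<Sum>i<n. \<Sum>j<n. x i * y j * c i j k) \<noteq> 0" unfolding sc_mult_def by (auto split: if_splits)
  then obtain i j where ij: "i < n" "j < n" "x i * y j * c i j k \<noteq> 0"
    by (meson lessThan_iff sum.neutral)
  then have "x i \<noteq> 0" "y j \<noteq> 0" "c i j k \<noteq> 0" by auto
  then have "0 < i" "a \<le> wt i" "0 < j" "b \<le> wt j" using assms unfolding F_def by auto
  moreover have "wt k = wt i + wt j" using grad ij \<open>k < n\<close> \<open>c i j k \<noteq> 0\<close> by auto
  moreover have "1 \<le> wt i" using wtpos \<open>0 < i\<close> ij by auto
  ultimately show "0 < k \<and> a + b \<le> wt k" using wt0 by (cases "k = 0") auto
  qed
  then show ?thesis unfolding F_def using sc_carrier by auto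
qed

lemma E_F: "0 < t \<Longrightarrow> t < n \<Longrightarrow> E t \<in> F (wt t)"
  unfolding F_def E_def carrier_n_def by auto


lemma e_carrier: "e \<in> carrier_n n" using E_carrier n_pos by auto

lemma L_subspace: "V.subspace (L_sc n c e S i)"
  unfolding L_eq by simp

lemma e_in_L: "e \<in> L_sc n c e S i"
proof -
  have "(e, 0) \<in> words mul e S" by (rule words.w_one)
  then have "e \<in> L_sc n c e S 0" by (rule word_in_L)
  then show ?thesis using L_mono[of 0 i n c e S] by blast
qed

lemma gen_in_L: "s \<in> S \<Longrightarrow> 0 < i \<Longrightarrow> s \<in> L_sc n c e S i"
proof -
  assume "s \<in> S" "0 < i"
  then have "(s, 1) \<in> words mul e S" by (intro words.w_gen)
  then have "s \<in> L_sc n c e S 1" by (rule word_in_L)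
  then show ?thesis using L_mono[of 1 i n c e S] \<open>0 < i\<close> by auto
qed

lemma core_step:
  assumes SF: "S \<subseteq> F 1"
    and gen1: "\<And>t. 0 < t \<Longrightarrow> t < n \<Longrightarrow> wt t = 1 \<Longrightarrow> \<exists>u f. u \<in> L_sc n c e S 1 \<and> f \<in> F 2 \<and> E t = u + f"
  shows "0 < t \<Longrightarrow> t < n \<Longrightarrow> \<exists>u f. u \<in> L_sc n c e S (wt t) \<and> f \<in> F (wt t + 1) \<and> E t = u + f"
proof (induct "wt t" arbitrary: t rule: less_induct)
  case less
  show ?case
  proof (cases "wt t = 1")
    case True
    then show ?thesis using gen1[OF less.prems] by (simp add: numeral_2_eq_2)
  next
    case False
    then have "2 \<le> wt t" using wtpos[OF less.prems] by auto
    then obtain a b where ab: "0 < a" "a < n" "0 < b" "b < n" "wt a + wt b = wt t"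
      "mul (E a) (E b) = E t" using decomp less.prems by blast
    have wa: "1 \<le> wt a" "1 \<le> wt b" using wtpos ab by auto
    obtain ua fa where A: "ua \<in> L_sc n c e S (wt a)" "fa \<in> F (wt a + 1)" "E a = ua + fa"
      using less.hyps[of a] ab wa by auto
    obtain ub fb where B: "ub \<in> L_sc n c e S (wt b)" "fb \<in> F (wt b + 1)" "E b = ub + fb"
      using less.hyps[of b] ab wa by auto
    have uaF: "ua \<in> F (wt a)"
    proof -
      have "ua = E a - fa" using A by simp
      moreover have "E a \<in> F (wt a)" using E_F ab by auto
      moreover have "fa \<in> F (wt a)" using A F_mono[of "wt a" "wt a + 1"] by auto
      ultimately show ?thesis using V.subspace_diff[OF F_sub] by auto
    qed
    have ubF: "ub \<in> F (wt b)"
    proof -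
      have "ub = E b - fb" using B by simp
      moreover have "E b \<in> F (wt b)" using E_F ab by auto
      moreover have "fb \<in> F (wt b)" using B F_mono[of "wt b" "wt b + 1"] by auto
      ultimately show ?thesis using V.subspace_diff[OF F_sub] by auto
    qed
    have "E t = mul ua ub + (mul ua fb + mul fa ub + mul fa fb)"
      using ab(6) A(3) B(3) by (simp add: sc_add_left sc_add_right algebra_simps)
    moreover have "mul ua ub \<in> L_sc n c e S (wt t)" using L_mult[OF A(1) B(1)] ab by simp
    moreover have "mul ua fb + mul fa ub + mul fa fb \<in> F (wt t + 1)"
    proof -
      have 1: "mul ua fb \<in> F (wt t + 1)" using F_mult[OF uaF B(2)] ab by simp
      have 2: "mul fa ub \<in> F (wt t + 1)" using F_mult[OF A(2) ubF] ab by simp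
      have 3: "mul fa fb \<in> F (wt t + 1)" using F_mult[OF A(2) B(2)] ab F_mono[of "wt t + 1" "wt a + 1 + (wt b + 1)"] by auto
      show ?thesis using 1 2 3 V.subspace_add[OF F_sub] by blast
    qed
    ultimately show ?thesis by blast
  qed
qed

lemma all_E_in:
  assumes SF: "S \<subseteq> F 1"
    and gen1: "\<And>t. 0 < t \<Longrightarrow> t < n \<Longrightarrow> wt t = 1 \<Longrightarrow> \<exists>u f. u \<in> L_sc n c e S 1 \<and> f \<in> F 2 \<and> E t = u + f"
  shows "0 < t \<Longrightarrow> t < n \<Longrightarrow> E t \<in> L_sc n c e S M"
proof (induct "M - wt t" arbitrary: t rule: less_induct)
  case less
  obtain u f where uf: "u \<in> L_sc n c e S (wt t)" "f \<in> F (wt t + 1)" "E t = u + f"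
    using core_step[OF SF gen1 less.prems] by blast
  have "u \<in> L_sc n c e S M" using uf(1) L_mono[of "wt t" M n c e S] wtpos less.prems by auto
  moreover have "f \<in> L_sc n c e S M"
  proof -
    have fc: "f \<in> carrier_n n" using uf(2) unfolding F_def by auto
    have "(\<Sum>s<n. scl (f s) (E s)) \<in> L_sc n c e S M"
    proof (rule V.subspace_sum[OF L_subspace])
      fix s assume s: "s \<in> {..<n}"
      show "scl (f s) (E s) \<in> L_sc n c e S M"
      proof (cases "f s = 0")
        case True then show ?thesis using V.subspace_0[OF L_subspace] by simp
      next
        case False
        then have "0 < s" "wt t + 1 \<le> wt s" using uf(2) unfolding F_def by auto
        moreover have "wt s \<le> M" using wtpos \<open>0 < s\<close> s by auto
        ultimately have "M - wt s < M - wt t" by auto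
        then have "E s \<in> L_sc n c e S M" using less.hyps \<open>0 < s\<close> s by auto
        then show ?thesis using V.subspace_scale[OF L_subspace] by auto
      qed
    qed
    then show ?thesis using carrier_expand[OF fc] by simp
  qed
  ultimately show ?case using uf(3) V.subspace_add[OF L_subspace] by auto
qed

lemma L_full:
  assumes SF: "S \<subseteq> F 1"
    and gen1: "\<And>t. 0 < t \<Longrightarrow> t < n \<Longrightarrow> wt t = 1 \<Longrightarrow> \<exists>u f. u \<in> L_sc n c e S 1 \<and> f \<in> F 2 \<and> E t = u + f"
  shows "L_sc n c e S M = carrier_n n"
proof
  have "S \<subseteq> carrier_n n" using SF unfolding F_def by auto
  then show "L_sc n c e S M \<subseteq> carrier_n n" using L_carrier e_carrier by blast
next
  show "carrier_n n \<subseteq> L_sc n c e S M"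
  proof
    fix v :: "nat \<Rightarrow> 'f" assume v: "v \<in> carrier_n n"
    have "(\<Sum>s<n. scl (v s) (E s)) \<in> L_sc n c e S M"
    proof (rule V.subspace_sum[OF L_subspace])
      fix s assume s: "s \<in> {..<n}"
      have "E s \<in> L_sc n c e S M"
      proof (cases "s = 0")
        case True then show ?thesis using e_in_L by simp
      next
        case False then show ?thesis using all_E_in[OF SF gen1] s by auto
      qed
      then show "scl (v s) (E s) \<in> L_sc n c e S M" using V.subspace_scale[OF L_subspace] by auto
    qed
    then show "v \<in> L_sc n c e S M" using carrier_expand[OF v] by simp
  qed
qed

lemma wclass:
  assumes S'F: "S' \<subseteq> F 1"
  shows "(x, j) \<in> words mul e S' \<Longrightarrow> (j = 0 \<and> x = e) \<or> (j = 1 \<and> x \<in> S') \<or> (2 \<le> j \<and> x \<in> F 2)"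
proof (induct rule: words.induct)
  case w_one then show ?case by simp
next
  case (w_gen s) then show ?case by simp
next
  case (w_mul x a y b)
  have F21: "F 2 \<subseteq> F 1" by (rule F_mono) simp
  have car: "F 1 \<subseteq> carrier_n n" unfolding F_def by auto
  have unitl: "mul e z = z" "mul z e = z" if "z \<in> carrier_n n" for z
    using unit that unfolding is_unit_of_def by auto
  show ?case
  proof (cases "a = 0")
    case True
    then have "x = e" using w_mul.hyps(2) by auto
    moreover have "y \<in> carrier_n n" using w_mul.hyps(4) S'F F21 car e_carrier by auto
    ultimately show ?thesis using w_mul.hyps(4) True unitl by auto
  next
    case False
    show ?thesis
    proof (cases "b = 0")
      case True
      then have "y = e" using w_mul.hyps(4) by auto
      moreover have "x \<in> carrier_n n" using w_mul.hyps(2) S'F F21 car e_carrier by auto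
      ultimately show ?thesis using w_mul.hyps(2) True unitl by auto
    next
      case False
      have "x \<in> F 1" "y \<in> F 1" using w_mul.hyps(2,4) \<open>a \<noteq> 0\<close> False S'F F21 by auto
      then have "mul x y \<in> F 2" using F_mult[of x 1 y 1] by (simp add: numeral_2_eq_2)
      then show ?thesis using \<open>a \<noteq> 0\<close> False by auto
    qed
  qed
qed

lemma upper:
  assumes gen: "generating_sc n c e S"
  shows "length_set_sc n c e S \<le> M"
proof -
  define S' where "S' = (\<lambda>s. s - scl (s 0) e) ` S"
  have Sc: "S \<subseteq> carrier_n n" using gen unfolding generating_sc_def by auto
  have S'c: "S' \<subseteq> carrier_n n"
    unfolding S'_def using Sc e_carrier V.subspace_diff[OF carrier_subspace] V.subspace_scale[OF carrier_subspace] by blast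
  have S'F: "S' \<subseteq> F 1"
  proof
    fix x assume x: "x \<in> S'"
    then have x0: "x 0 = 0" unfolding S'_def by (auto simp: scl_def E_def)
    have xc: "x \<in> carrier_n n" using x S'c by auto
    have "0 < t \<and> 1 \<le> wt t" if "x t \<noteq> 0" for t
    proof -
      have "t \<noteq> 0" using that x0 by metis
      moreover have "t < n" using xc that unfolding carrier_n_def by (auto simp: not_le[symmetric])
      ultimately show ?thesis using wtpos by auto
    qed
    then show "x \<in> F 1" unfolding F_def using xc by auto
  qed
  have S'L: "S' \<subseteq> L_sc n c e S 1"
  proof
    fix x assume "x \<in> S'"
    then obtain s where s: "s \<in> S" "x = s - scl (s 0) e" unfolding S'_def by auto
    have "s \<in> L_sc n c e S 1" using gen_in_L s by auto
    moreover have "scl (s 0) e \<in> L_sc n c e S 1" using e_in_L V.subspace_scale[OF L_subspace] by auto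
    ultimately show "x \<in> L_sc n c e S 1" using s V.subspace_diff[OF L_subspace] by auto
  qed
  have SL: "S \<subseteq> L_sc n c e S' 1"
  proof
    fix s assume s: "s \<in> S"
    then have "s - scl (s 0) e \<in> S'" unfolding S'_def by auto
    then have "s - scl (s 0) e \<in> L_sc n c e S' 1" using gen_in_L by auto
    moreover have "scl (s 0) e \<in> L_sc n c e S' 1" using e_in_L V.subspace_scale[OF L_subspace] by auto
    ultimately have "(s - scl (s 0) e) + scl (s 0) e \<in> L_sc n c e S' 1" by (rule V.subspace_add[OF L_subspace])
    then show "s \<in> L_sc n c e S' 1" by simp
  qed
  have Leq: "L_sc n c e S i = L_sc n c e S' i" for i
    using L_sub_of[OF S'L] L_sub_of[OF SL] by auto
  define Q where "Q = {v. \<exists>\<alpha> \<sigma> f. \<sigma> \<in> V.span S' \<and> f \<in> F 2 \<and> v = scl \<alpha> e + \<sigma> + f}"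
  have Qsub: "V.subspace Q"
  proof (rule V.subspaceI)
    show "0 \<in> Q" unfolding Q_def
      by (rule CollectI, rule exI[of _ 0], rule exI[of _ 0], rule exI[of _ 0])
         (simp add: V.span_zero V.subspace_0[OF F_sub])
  next
    fix x y assume "x \<in> Q" "y \<in> Q"
    then obtain a1 s1 f1 a2 s2 f2 where h: "s1 \<in> V.span S'" "f1 \<in> F 2" "x = scl a1 e + s1 + f1"
      "s2 \<in> V.span S'" "f2 \<in> F 2" "y = scl a2 e + s2 + f2" unfolding Q_def by blast
    have "x + y = scl (a1 + a2) e + (s1 + s2) + (f1 + f2)"
      using h by (simp add: V.scale_left_distrib algebra_simps)
    then show "x + y \<in> Q" unfolding Q_def using h V.span_add V.subspace_add[OF F_sub] by blast
  next
    fix a x assume "x \<in> Q"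
    then obtain a1 s1 f1 where h: "s1 \<in> V.span S'" "f1 \<in> F 2" "x = scl a1 e + s1 + f1"
      unfolding Q_def by blast
    have "scl a x = scl (a * a1) e + scl a s1 + scl a f1"
      using h by (simp add: V.scale_right_distrib)
    then show "scl a x \<in> Q" unfolding Q_def using h V.span_scale V.subspace_scale[OF F_sub] by blast
  qed
  have LQ: "L_sc n c e S' i \<subseteq> Q" for i
    unfolding L_eq
  proof (rule V.span_minimal[OF _ Qsub])
    show "W n c e S' i \<subseteq> Q"
    proof
      fix x assume "x \<in> W n c e S' i"
      then obtain j where "(x, j) \<in> words mul e S'" unfolding W_def by auto
      from wclass[OF S'F this] show "x \<in> Q"
      proof (elim disjE conjE)
        assume "x = e" then show ?thesis unfolding Q_def
          by (intro CollectI exI[of _ 1] exI[of _ 0]) (simp add: V.span_zero V.subspace_0[OF F_sub])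
      next
        assume "x \<in> S'" then show ?thesis unfolding Q_def
          by (intro CollectI exI[of _ 0] exI[of _ x]) (simp add: V.span_base V.subspace_0[OF F_sub])
      next
        assume "x \<in> F 2" then show ?thesis unfolding Q_def
          by (intro CollectI exI[of _ 0] exI[of _ 0] exI[of _ x]) (simp add: V.span_zero)
      qed
    qed
  qed
  have spanF: "V.span S' \<subseteq> F 1" by (rule V.span_minimal[OF S'F F_sub])
  have gen1: "\<exists>u f. u \<in> L_sc n c e S' 1 \<and> f \<in> F 2 \<and> E t = u + f"
    if t: "0 < t" "t < n" "wt t = 1" for t
  proof -
    have "E t \<in> carrier_n n" using E_carrier t by auto
    then obtain i where "E t \<in> L_sc n c e S i" using gen unfolding generating_sc_def by auto
    then have "E t \<in> Q" using Leq LQ by auto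
    then obtain \<alpha> \<sigma> f where h: "\<sigma> \<in> V.span S'" "f \<in> F 2" "E t = scl \<alpha> e + \<sigma> + f"
      unfolding Q_def by blast
    have "\<sigma> 0 = 0" using h(1) spanF unfolding F_def by auto
    moreover have "f 0 = 0" using h(2) unfolding F_def by auto
    moreover have "E t 0 = 0" using t unfolding E_def by auto
    ultimately have "\<alpha> = 0" using fun_cong[OF h(3), of 0] by (simp add: scl_def E_def split: if_splits)
    then have "E t = \<sigma> + f" using h(3) by simp
    moreover have "\<sigma> \<in> L_sc n c e S' 1"
    proof -
      have "S' \<subseteq> W n c e S' 1" unfolding W_def using words.w_gen[of _ S' mul e] by auto
      then show ?thesis using h(1) V.span_mono unfolding L_eq by blast
    qed
    ultimately show ?thesis using h(2) by blast
  qed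
  have "L_sc n c e S' M = carrier_n n" by (rule L_full[OF S'F gen1])
  then have "L_sc n c e S M = carrier_n n" using Leq by simp
  then show ?thesis unfolding length_set_sc_def by (rule Least_le)
qed

definition H :: "nat \<Rightarrow> (nat \<Rightarrow> 'f) set" where
  "H j = {v. \<forall>t<n. v t \<noteq> 0 \<longrightarrow> wt t = j}"

lemma H_mult:
  assumes "x \<in> H a" "y \<in> H b"
  shows "mul x y \<in> H (a + b)"
proof -
  have "wt k = a + b" if "k < n" "mul x y k \<noteq> 0" for k
  proof -
    from that have "(\<Sum>i<n. \<Sum>j<n. x i * y j * c i j k) \<noteq> 0" unfolding sc_mult_def by auto
    then obtain i j where ij: "i < n" "j < n" "x i * y j * c i j k \<noteq> 0"
      by (meson lessThan_iff sum.neutral)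
    then have "x i \<noteq> 0" "y j \<noteq> 0" "c i j k \<noteq> 0" by auto
    then show ?thesis using assms ij grad[of i j k] that(1) unfolding H_def by auto
  qed
  then show ?thesis unfolding H_def by auto
qed

definition S0 :: "(nat \<Rightarrow> 'f) set" where
  "S0 = E ` {t. 0 < t \<and> t < n \<and> wt t = 1}"

lemma S0_words: "(x, j) \<in> words mul e S0 \<Longrightarrow> x \<in> H j"
proof (induct rule: words.induct)
  case w_one then show ?case unfolding H_def E_def using wt0 by auto
next
  case (w_gen s) then show ?case unfolding H_def S0_def E_def by (auto split: if_splits)
next
  case (w_mul x a y b) then show ?case using H_mult by auto
qed

lemma S0_F: "S0 \<subseteq> F 1"
proof
  fix x assume "x \<in> S0"
  then obtain t where "0 < t" "t < n" "wt t = 1" "x = E t" unfolding S0_def by auto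
  then show "x \<in> F 1" using E_F[of t] by simp
qed

lemma S0_full: "L_sc n c e S0 M = carrier_n n"
proof (rule L_full[OF S0_F])
  fix t assume t: "0 < t" "t < n" "wt t = 1"
  have "E t \<in> L_sc n c e S0 1" using gen_in_L[of "E t" S0 1] t unfolding S0_def by auto
  moreover have "(0 :: nat \<Rightarrow> 'f) \<in> F 2" by (rule V.subspace_0[OF F_sub])
  ultimately show "\<exists>u f. u \<in> L_sc n c e S0 1 \<and> f \<in> F 2 \<and> E t = u + f"
    by (intro exI[of _ "E t"] exI[of _ 0]) simp
qed

lemma S0_gen: "generating_sc n c e S0"
proof -
  have fin: "finite S0" unfolding S0_def by auto
  have sub: "S0 \<subseteq> carrier_n n" using S0_F unfolding F_def by auto
  have "(\<Union>i. L_sc n c e S0 i) = carrier_n n"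
    using L_carrier[OF sub e_carrier] S0_full by blast
  then show ?thesis unfolding generating_sc_def using fin sub by auto
qed

lemma S0_length: "length_set_sc n c e S0 = M"
  unfolding length_set_sc_def
proof (rule Least_equality)
  show "L_sc n c e S0 M = carrier_n n" by (rule S0_full)
next
  fix k assume Lk: "L_sc n c e S0 k = carrier_n n"
  obtain tt where tt: "tt < n" "wt tt = M" using top by auto
  show "M \<le> k"
  proof (rule ccontr)
    assume "\<not> M \<le> k"
    then have kM: "k < M" by simp
    have Zsub: "V.subspace {v. v tt = 0}" unfolding V.subspace_def scl_def by auto
    have "W n c e S0 k \<subseteq> {v. v tt = 0}"
    proof
      fix x assume "x \<in> W n c e S0 k"
      then obtain j where "j \<le> k" "(x, j) \<in> words mul e S0" unfolding W_def by auto
      then have xH: "x \<in> H j" and jM: "j \<noteq> M" using kM by (auto intro: S0_words)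
      have "x tt = 0"
      proof (rule ccontr)
        assume "x tt \<noteq> 0"
        then have "wt tt = j" using xH tt(1) unfolding H_def by blast
        then show False using jM tt(2) by simp
      qed
      then show "x \<in> {v. v tt = 0}" by simp
    qed
    then have Lsub: "L_sc n c e S0 k \<subseteq> {v. v tt = 0}" unfolding L_eq by (rule V.span_minimal[OF _ Zsub])
    have "(E tt :: nat \<Rightarrow> 'f) \<in> carrier_n n" using E_carrier tt by auto
    then have "(E tt :: nat \<Rightarrow> 'f) \<in> L_sc n c e S0 k" using Lk by simp
    with Lsub have "(E tt :: nat \<Rightarrow> 'f) \<in> {v. v tt = 0}" by (rule subsetD)
    then have "(E tt :: nat \<Rightarrow> 'f) tt = 0" by simp
    then show False unfolding E_def by simp
  qed
qed

theorem main: "unital_sc n c \<and> algebra_length_is n c M"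
proof -
  have "unital_sc n c" unfolding unital_sc_def using unit by blast
  moreover have "algebra_length_is n c M" unfolding algebra_length_is_def
    apply (rule exI[of _ e])
    using unit S0_gen S0_length upper by blast
  ultimately show ?thesis by blast
qed

end


definition is_chain :: "(nat \<Rightarrow> nat) \<Rightarrow> nat \<Rightarrow> bool" where
  "is_chain v m \<longleftrightarrow> 1 \<le> m \<and> v 1 = 1 \<and> (\<forall>i. 1 \<le> i \<longrightarrow> i < m \<longrightarrow> v (Suc i) = 2 * v i \<or> v (Suc i) = Suc (v i))"

lemma ones_count_eq: "ones_count l = (if l = 0 then 0 else l mod 2 + ones_count (l div 2))"
  by (rule ones_count.simps)

lemma chain_exists:
  "0 < l \<Longrightarrow> l < 2 ^ p \<Longrightarrow> ones_count l \<le> q \<Longrightarrow> \<exists>v m. is_chain v m \<and> m + 1 \<le> p + q \<and> v m = l"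
proof (induct l arbitrary: p q rule: less_induct)
  case (less l)
  show ?case
  proof (cases "l = 1")
    case True
    have "p \<noteq> 0" using less.prems True by (cases p) auto
    moreover have "1 \<le> q" using less.prems True by (simp add: ones_count_eq)
    ultimately show ?thesis using True
      by (intro exI[of _ "\<lambda>_. 1"] exI[of _ 1]) (auto simp: is_chain_def)
  next
    case False
    then have l2: "2 \<le> l" using less.prems by auto
    define l' where "l' = l div 2"
    have l'pos: "0 < l'" "l' < l" using l2 unfolding l'_def by auto
    have "p \<noteq> 0" using less.prems l2 by (cases p) auto
    then obtain p' where p: "p = Suc p'" by (cases p) auto
    have l'p: "l' < 2 ^ p'" using less.prems(2) p unfolding l'_def by auto
    have oc: "ones_count l = l mod 2 + ones_count l'" using l2 unfolding l'_def by (subst ones_count_eq) simp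
    show ?thesis
    proof (cases "even l")
      case True
      then have "ones_count l' \<le> q" using oc less.prems by auto
      then obtain v m where vm: "is_chain v m" "m + 1 \<le> p' + q" "v m = l'"
        using less.hyps[OF l'pos(2) l'pos(1) l'p] by blast
      define v' where "v' = v(Suc m := 2 * l')"
      have "is_chain v' (Suc m)"
        using vm(1,3) unfolding is_chain_def v'_def by auto
      moreover have "v' (Suc m) = l" using True unfolding v'_def l'_def by auto
      ultimately show ?thesis using vm(2) p by (intro exI[of _ v'] exI[of _ "Suc m"]) auto
    next
      case False
      then have "l mod 2 = 1" by presburger
      then have q: "ones_count l' \<le> q - 1" "1 \<le> q" using oc less.prems by auto
      then obtain v m where vm: "is_chain v m" "m + 1 \<le> p' + (q - 1)" "v m = l'"
        using less.hyps[OF l'pos(2) l'pos(1) l'p] by blast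
      define v' where "v' = v(Suc m := 2 * l', Suc (Suc m) := Suc (2 * l'))"
      have "is_chain v' (Suc (Suc m))"
        using vm(1,3) unfolding is_chain_def v'_def by auto
      moreover have "Suc (2 * l') = l" using \<open>l mod 2 = 1\<close> unfolding l'_def by presburger
      then have "v' (Suc (Suc m)) = l" unfolding v'_def by simp
      ultimately show ?thesis using vm(2) p q by (intro exI[of _ v'] exI[of _ "Suc (Suc m)"]) auto
    qed
  qed
qed

lemma chain_pos: "is_chain v m \<Longrightarrow> 1 \<le> i \<Longrightarrow> i \<le> m \<Longrightarrow> 1 \<le> v i"
proof (induct i)
  case 0 then show ?case by simp
next
  case (Suc i)
  show ?case
  proof (cases "i = 0")
    case True then show ?thesis using Suc.prems unfolding is_chain_def by auto
  next
    case False
    then have "1 \<le> v i" using Suc by auto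
    moreover have "v (Suc i) = 2 * v i \<or> v (Suc i) = Suc (v i)" using Suc.prems False unfolding is_chain_def by auto
    ultimately show ?thesis by auto
  qed
qed

lemma chain_mono: "is_chain v m \<Longrightarrow> 1 \<le> i \<Longrightarrow> i \<le> j \<Longrightarrow> j \<le> m \<Longrightarrow> v i \<le> v j"
proof (induct j)
  case 0 then show ?case by simp
next
  case (Suc j)
  show ?case
  proof (cases "i = Suc j")
    case True then show ?thesis by simp
  next
    case False
    then have "v i \<le> v j" "1 \<le> j" using Suc by auto
    moreover have "v (Suc j) = 2 * v j \<or> v (Suc j) = Suc (v j)" using Suc.prems \<open>1 \<le> j\<close> unfolding is_chain_def by auto
    ultimately show ?thesis by auto
  qed
qed

definition cwt :: "(nat \<Rightarrow> nat) \<Rightarrow> nat \<Rightarrow> nat \<Rightarrow> nat" where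
  "cwt v m t = (if t = 0 then 0 else if t \<le> m then v t else 1)"

definition pp :: "(nat \<Rightarrow> nat) \<Rightarrow> nat \<Rightarrow> nat" where
  "pp v t = (if v t = 2 * v (t - 1) then t - 1 else 1)"

definition cc :: "(nat \<Rightarrow> nat) \<Rightarrow> nat \<Rightarrow> nat \<Rightarrow> nat \<Rightarrow> nat \<Rightarrow> 'f::field" where
  "cc v m i j k = (if i = 0 then (if j = k then 1 else 0) else if j = 0 then (if i = k then 1 else 0)
     else if 2 \<le> k \<and> k \<le> m \<and> i = k - 1 \<and> j = pp v k then 1 else 0)"

lemma chain_galg:
  assumes ch: "is_chain v m" and mn: "m < n"
  shows "galg n (cc v m :: nat \<Rightarrow> nat \<Rightarrow> nat \<Rightarrow> 'f::field) (cwt v m) (v m)"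
proof
  have m1: "1 \<le> m" using ch unfolding is_chain_def by auto
  have v1: "v 1 = 1" using ch unfolding is_chain_def by auto
  have step: "v t = 2 * v (t - 1) \<or> v t = Suc (v (t - 1))" if "2 \<le> t" "t \<le> m" for t
  proof -
    have h: "\<forall>i. 1 \<le> i \<longrightarrow> i < m \<longrightarrow> v (Suc i) = 2 * v i \<or> v (Suc i) = Suc (v i)"
      using ch unfolding is_chain_def by auto
    have "1 \<le> t - 1" "t - 1 < m" using that by auto
    then have "v (Suc (t - 1)) = 2 * v (t - 1) \<or> v (Suc (t - 1)) = Suc (v (t - 1))" using h by blast
    moreover have "Suc (t - 1) = t" using that by simp
    ultimately show ?thesis by simp
  qed
  have lpos: "1 \<le> v m" using chain_pos[OF ch m1] by simp
  show "0 < n" using mn by simp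
  show "cc v m 0 j k = (if j = k then 1 else 0)" for j k unfolding cc_def by simp
  show "cc v m i 0 k = (if i = k then 1 else 0)" for i k unfolding cc_def by simp
  show "cwt v m 0 = 0" unfolding cwt_def by simp
  show "1 \<le> v m" by (rule lpos)
  show "\<exists>t<n. cwt v m t = v m" using m1 mn by (intro exI[of _ m]) (auto simp: cwt_def)
  show "1 \<le> cwt v m t \<and> cwt v m t \<le> v m" if "0 < t" "t < n" for t
    using that chain_pos[OF ch, of t] chain_mono[OF ch, of t m] lpos unfolding cwt_def by auto
  show "cwt v m k = cwt v m i + cwt v m j" if hyp: "i < n" "j < n" "k < n" "(cc v m i j k :: 'f) \<noteq> 0" for i j k
  proof -
    consider "i = 0" "j = k" | "i \<noteq> 0" "j = 0" "i = k" | "i \<noteq> 0" "j \<noteq> 0" "2 \<le> k" "k \<le> m" "i = k - 1" "j = pp v k"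
      using hyp(4) unfolding cc_def by (auto split: if_splits)
    then show ?thesis
    proof cases
      case 1 then show ?thesis unfolding cwt_def by simp
    next
      case 2 then show ?thesis unfolding cwt_def by simp
    next
      case 3
      have "cwt v m k = v k" "cwt v m i = v (k - 1)" using 3 unfolding cwt_def by auto
      moreover have "cwt v m j = (if v k = 2 * v (k - 1) then v (k - 1) else 1)"
        using 3 m1 v1 unfolding cwt_def pp_def by auto
      ultimately show ?thesis using step[OF 3(3,4)] by auto
    qed
  qed
  show "\<exists>a b. 0 < a \<and> a < n \<and> 0 < b \<and> b < n \<and> cwt v m a + cwt v m b = cwt v m t
      \<and> sc_mult n (cc v m) (E a) (E b) = (E t :: nat \<Rightarrow> 'f)"
    if t: "0 < t" "t < n" "2 \<le> cwt v m t" for t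
  proof -
    have tm: "t \<le> m" using t unfolding cwt_def by (auto split: if_splits)
    have t2: "2 \<le> t" using t tm v1 unfolding cwt_def by (cases "t = 1") auto
    define b where "b = pp v t"
    have b: "0 < b" "b < n" using t2 t unfolding b_def pp_def by auto
    have wsum: "cwt v m (t - 1) + cwt v m b = cwt v m t"
    proof -
      have "cwt v m t = v t" "cwt v m (t - 1) = v (t - 1)" using t2 tm unfolding cwt_def by auto
      moreover have "cwt v m b = (if v t = 2 * v (t - 1) then v (t - 1) else 1)"
        using t2 tm m1 v1 unfolding cwt_def b_def pp_def by auto
      ultimately show ?thesis using step[OF t2 tm] by auto
    qed
    have "sc_mult n (cc v m) (E (t - 1)) (E b) = (\<lambda>k. if k < n then cc v m (t - 1) b k else 0)"
      using t b by (intro sc_E_E) auto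
    also have "\<dots> = (E t :: nat \<Rightarrow> 'f)"
    proof (rule ext)
      fix k
      show "(if k < n then (cc v m (t - 1) b k :: 'f) else 0) = E t k"
        using t2 tm t b unfolding cc_def E_def b_def by auto
    qed
    finally show ?thesis using t2 t b wsum by (intro exI[of _ "t - 1"] exI[of _ b]) auto
  qed
qed

theorem proposition4p3:
  fixes n k l :: nat
  assumes "1 < k" and "k < n" and "0 < l" and "l < 2 ^ (n - k)"
    and "ones_count l \<le> k"
  shows "\<exists>c :: nat \<Rightarrow> nat \<Rightarrow> nat \<Rightarrow> 'f::field.
           unital_sc n c \<and> algebra_length_is n c l"
proof -
  obtain v m where vm: "is_chain v m" "m + 1 \<le> (n - k) + k" "v m = l"
    using chain_exists[OF assms(3,4,5)] by blast
  have "m < n" using vm(2) assms(2) by auto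
  then interpret G: galg n "cc v m :: nat \<Rightarrow> nat \<Rightarrow> nat \<Rightarrow> 'f" "cwt v m" "v m"
    by (rule chain_galg[OF vm(1)])
  show ?thesis using G.main vm(3) by blast
qed

end
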